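(* Let $n=2$. (1) Every final admissible word $\omega$ has the form $\omega=\tau*j_1^\infty*\mathsf{ext}*j_2^k*j_2^\infty*\mathsf{ext}$ with $\tau\in[2]^*$, $\{j_1,j_2\}=\{1,2\}$ and $k\ge0$. For such $\omega$ put $N_\omega:=e_{j_2}^TM_\omega$ (a row vector). Then (2) $N_\omega\ge0$ entrywise, its entries are coprime, and $N_\omega=e_i^T$ is possible only for $i=j_2$. (3) Modulo the equivalence relation on words generated by replacing a subword $j\,j^\infty$ by $j^\infty$ ($j\in\{1,2\}$), a final admissible word $\omega$ is uniquely determined by the pair $(N_\omega,j_1)$. (4) Conversely, for every row vector $N\in\mathbb{Z}^{1\times2}_{\ge0}$ with coprime entries and every $j_1\in\{1,2\}$ with $N\ne e_{j_1}^T$, there is a final admissible $\omega$ of the form in (1) with this $j_1$ such that $N_\omega=N$.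
   Context: Here $n=2$, $e_1,e_2$ standard basis of $\mathbb{Z}^2$. The alphabet is $L=\{1,2,1^\infty,2^\infty,\mathsf{ext}\}$ (each $j^\infty$ and $\mathsf{ext}$ is a single letter); $\varepsilon$ is the empty word, $*$ concatenation, $j^k$ denotes $k$ copies of the letter $j$. A finite word $\omega$ over $L$ is admissible if: (i) whenever $j^\infty$ occurs, the subsequent part of $\omega$ contains neither $j$ nor $j^\infty$; (ii) the only letter allowed directly after $j^\infty$ is $\mathsf{ext}$; (iii) every $\mathsf{ext}$ occurs directly after some $j^\infty$. It is final if it contains the subword $j^\infty\mathsf{ext}$ for every $j\in\{1,2\}$. $X(\omega)$ is the set of $j$ such that $j^\infty\mathsf{ext}$ is a subword of $\omega$, $Y(\omega)=\{1,2\}\setminus X(\omega)$. Define recursively $\delta^i_\omega$: $\delta^i_\varepsilon=e_i$; $\delta^i_{\omega*j^\infty}=\delta^i_{\omega*\mathsf{ext}}=\delta^i_\omega$; $\delta^i_{\omega*j}=\delta^i_\omega$ if $i\in X(\omega)\cup\{j\}$ and $\delta^i_{\omega*j}=\delta^i_\omega-\delta^j_\omega$ if $i\in Y(\omega)\setminus\{j\}$. Let $M_\omega=(\delta^1_\omega\ \delta^2_\omega)^{-1}$, the inverse of the matrix with columns $\delta^1_\omega,\delta^2_\omega$. *)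

theory Defs
  imports "HOL-Analysis.Analysis"
begin

text \<open>Alphabet L = {1,2,1^inf,2^inf,ext}; the index set [2] = {1,2} is the numeral type 2
  (whose two elements are written 1 and 2).\<close>
datatype letter = Fin "2" | Inf "2" | Ext

definition admissible :: "letter list \<Rightarrow> bool" where
  "admissible w \<longleftrightarrow>
     (\<forall>p q j. p < q \<and> q < length w \<and> w ! p = Inf j \<longrightarrow> w ! q \<noteq> Fin j \<and> w ! q \<noteq> Inf j) \<and>
     (\<forall>p j. Suc p < length w \<and> w ! p = Inf j \<longrightarrow> w ! Suc p = Ext) \<and>
     (\<forall>p. p < length w \<and> w ! p = Ext \<longrightarrow> (\<exists>q j. Suc q = p \<and> w ! q = Inf j))"

definition Xw :: "letter list \<Rightarrow> 2 set" where
  "Xw w = {j. \<exists>p. Suc p < length w \<and> w ! p = Inf j \<and> w ! Suc p = Ext}"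

definition final :: "letter list \<Rightarrow> bool" where
  "final w \<longleftrightarrow> (\<forall>j::2. j \<in> Xw w)"

text \<open>delta on the reversed word (so that the recursion on the last letter is structural).
  Since i ranges over {1,2}, "i in Y(w) - {j}" is "not (i in X(w) or i = j)".\<close>
fun delta_rev :: "letter list \<Rightarrow> 2 \<Rightarrow> real^2" where
  "delta_rev [] i = axis i 1"
| "delta_rev (Inf j # ws) i = delta_rev ws i"
| "delta_rev (Ext # ws) i = delta_rev ws i"
| "delta_rev (Fin j # ws) i =
     (if i \<in> Xw (rev ws) \<or> i = j then delta_rev ws i else delta_rev ws i - delta_rev ws j)"

definition delta :: "letter list \<Rightarrow> 2 \<Rightarrow> real^2" where
  "delta w i = delta_rev (rev w) i"

definition Mmat :: "letter list \<Rightarrow> real^2^2" where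
  "Mmat w = matrix_inv (\<chi> r c. delta w c $ r)"

definition shape :: "letter list \<Rightarrow> 2 \<Rightarrow> 2 \<Rightarrow> nat \<Rightarrow> letter list" where
  "shape tau j1 j2 k = tau @ [Inf j1, Ext] @ replicate k (Fin j2) @ [Inf j2, Ext]"

definition red_step :: "letter list \<Rightarrow> letter list \<Rightarrow> bool" where
  "red_step u v \<longleftrightarrow> (\<exists>x y j. u = x @ [Fin j, Inf j] @ y \<and> v = x @ [Inf j] @ y)"

definition word_equiv :: "letter list \<Rightarrow> letter list \<Rightarrow> bool" where
  "word_equiv = (\<lambda>u v. red_step u v \<or> red_step v u)\<^sup>*\<^sup>*"

end

theory Submission
  imports Defs
begin


type_synonym m4 = "int \<times> int \<times> int \<times> int"

fun Mstep :: "m4 \<Rightarrow> letter \<Rightarrow> m4" where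
  "Mstep (a,b,c,d) (Fin j) = (if j = 1 then (a + c,b + d,c,d) else (a,b,c + a,d + b))"
| "Mstep m (Inf j) = m"
| "Mstep m Ext = m"

fun Dstep :: "m4 \<Rightarrow> letter \<Rightarrow> m4" where
  "Dstep (p,q,r,s) (Fin j) = (if j = 1 then (p,q-p,r,s-r) else (p-q,q,r-s,s))"
| "Dstep m (Inf j) = m"
| "Dstep m Ext = m"

definition Mi :: "letter list \<Rightarrow> m4" where "Mi ts = foldl Mstep (1,0,0,1) ts"
definition Di :: "letter list \<Rightarrow> m4" where "Di ts = foldl Dstep (1,0,0,1) ts"

lemma Mi_Nil[simp]: "Mi [] = (1,0,0,1)" by (simp add: Mi_def)
lemma Mi_snoc[simp]: "Mi (ts @ [x]) = Mstep (Mi ts) x" by (simp add: Mi_def)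
lemma Di_Nil[simp]: "Di [] = (1,0,0,1)" by (simp add: Di_def)
lemma Di_snoc[simp]: "Di (ts @ [x]) = Dstep (Di ts) x" by (simp add: Di_def)

fun mmul :: "m4 \<Rightarrow> m4 \<Rightarrow> m4" where
  "mmul (a,b,c,d) (p,q,r,s) = (a * p + b * r, a * q + b * s, c * p + d * r, c * q + d * s)"

fun ent :: "m4 \<Rightarrow> 2 \<Rightarrow> 2 \<Rightarrow> int" where
  "ent (a,b,c,d) r c' = (if r = 1 then (if c' = 1 then a else b) else (if c' = 1 then c else d))"

lemma two_cases: "(j::2) \<noteq> 1 \<Longrightarrow> j = 2" using exhaust_2 by blast

lemma DM: "mmul (Di ts) (Mi ts) = (1,0,0,1) \<and> mmul (Mi ts) (Di ts) = (1,0,0,1)"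
proof (induction ts rule: rev_induct)
  case Nil then show ?case by simp
next
  case (snoc x ts)
  obtain p q r s where D: "Di ts = (p,q,r,s)" by (cases "Di ts") auto
  obtain a b c d where M: "Mi ts = (a,b,c,d)" by (cases "Mi ts") auto
  from snoc D M have h: "p * a + q * c = 1" "p * b + q * d = 0" "r * a + s * c = 0" "r * b + s * d = 1"
     "a * p + b * r = 1" "a * q + b * s=0" "c * p + d * r = 0" "c * q + d * s = 1" by auto
  show ?case
  proof (cases x)
    case (Fin j)
    then show ?thesis using D M h by (auto simp: algebra_simps)
  qed (use snoc D M in auto)
qed

lemma Mi_inv: "Mi ts = (a,b,c,d) \<Longrightarrow> a \<ge> 0 \<and> b \<ge> 0 \<and> c \<ge> 0 \<and> d \<ge> 0 \<and> a * d - b * c = 1 \<and> a + b+c + d \<ge> 2"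
proof (induction ts arbitrary: a b c d rule: rev_induct)
  case Nil then show ?case by simp
next
  case (snoc x ts)
  obtain a' b' c' d' where M: "Mi ts = (a',b',c',d')" by (cases "Mi ts") auto
  note ih = snoc.IH[OF M]
  show ?case
  proof (cases x)
    case (Fin j)
    then show ?thesis using snoc.prems M ih by (auto simp: algebra_simps split: if_splits)
  qed (use snoc M ih in auto)
qed

lemma Xw_Fin: "set tau \<subseteq> range Fin \<Longrightarrow> Xw tau = {}"
  unfolding Xw_def by (auto dest!: nth_mem)

lemma delta_Fin: "set tau \<subseteq> range Fin \<Longrightarrow> delta tau c = (\<chi> r. of_int (ent (Di tau) r c))"
proof (induction tau arbitrary: c rule: rev_induct)
  case Nil then show ?case by (auto simp: delta_def vec_eq_iff axis_def dest: two_cases)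
next
  case (snoc x ts)
  then obtain j where x: "x = Fin j" by auto
  have ts: "set ts \<subseteq> range Fin" using snoc by auto
  obtain p q r s where D: "Di ts = (p,q,r,s)" by (cases "Di ts") auto
  have e: "delta (ts @ [x]) c = (if c = j then delta ts c else delta ts c - delta ts j)"
    using Xw_Fin[OF ts] by (simp add: delta_def x)
  show ?case unfolding e using snoc.IH[OF ts] D x
    by (auto simp: vec_eq_iff forall_2 dest: two_cases)
qed


lemma Xw_Fin_X: "j1 \<in> Xw (rest @ [Inf j1, Ext] @ zs)"
  unfolding Xw_def by (rule CollectI, rule exI[of _ "length rest"]) (simp add: nth_append)

lemma delta_rev_rep: "j1 \<noteq> j2 \<Longrightarrow>
  delta_rev (replicate k (Fin j2) @ Ext # Inf j1 # rest) c = delta_rev rest c"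
proof (induction k)
  case 0 then show ?case by simp
next
  case (Suc k)
  have "j1 \<in> Xw (rev (replicate k (Fin j2) @ Ext # Inf j1 # rest))"
    using Xw_Fin_X[of j1 "rev rest" "replicate k (Fin j2)"] by simp
  moreover have "c = j1 \<or> c = j2" using Suc.prems exhaust_2 by metis
  ultimately show ?case using Suc by auto
qed

lemma delta_shape: "j1 \<noteq> j2 \<Longrightarrow> delta (shape tau j1 j2 k) c = delta tau c"
  unfolding delta_def shape_def using delta_rev_rep[of j1 j2 k "rev tau" c] by simp

lemma inv_unique:
  fixes A B :: "real^2^2"
  assumes "A ** B = mat 1" "B ** A = mat 1"
  shows "matrix_inv A = B"
proof -
  have ex: "\<exists>A'. A ** A' = mat 1 \<and> A' ** A = mat 1" using assms by blast
  define C where "C = matrix_inv A"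
  have C: "A ** C = mat 1 \<and> C ** A = mat 1" unfolding C_def matrix_inv_def by (rule someI_ex[OF ex])
  have "C = C ** (A ** B)" using assms by simp
  also have "\<dots> = (C ** A) ** B" by (simp add: matrix_mul_assoc)
  also have "\<dots> = B" using C by simp
  finally show ?thesis unfolding C_def .
qed

lemma Mmat_shape:
  assumes "set tau \<subseteq> range Fin" "j1 \<noteq> j2"
  shows "Mmat (shape tau j1 j2 k) = (\<chi> r c. of_int (ent (Mi tau) r c))"
proof -
  obtain p q r s where D: "Di tau = (p,q,r,s)" by (cases "Di tau") auto
  obtain a b c d where M: "Mi tau = (a,b,c,d)" by (cases "Mi tau") auto
  have h: "p * a + q * c = 1" "p * b + q * d = 0" "r * a + s * c = 0" "r * b + s * d = 1"
     "a * p + b * r = 1" "a * q + b * s=0" "c * p + d * r = 0" "c * q + d * s = 1"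
    using DM[of tau] D M by auto
  then have h': "real_of_int p * of_int a + of_int q * of_int c = 1" "of_int p * of_int b + of_int q * (of_int d::real) = 0" 
    "of_int r * of_int a + of_int s * of_int c = (0::real)" "of_int r * of_int b + of_int s * of_int d = (1::real)"
     "of_int a * of_int p + of_int b * of_int r = (1::real)" "of_int a * of_int q + of_int b * of_int s=(0::real)" 
     "of_int c * of_int p + of_int d * of_int r = (0::real)" "of_int c * of_int q + of_int d * of_int s = (1::real)"
    by (metis of_int_add of_int_mult of_int_1 of_int_0)+
  have "(\<chi> r c. delta (shape tau j1 j2 k) c $ r) = (\<chi> r c. of_int (ent (Di tau) r c))"
    using delta_shape[OF assms(2)] delta_Fin[OF assms(1)] by (simp add: vec_eq_iff)
  moreover have "(\<chi> r c. of_int (ent (Di tau) r c)) ** (\<chi> r c. of_int (ent (Mi tau) r c)) = (mat 1 :: real^2^2)"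
    using D M h' by (auto simp: vec_eq_iff forall_2 matrix_matrix_mult_def sum_2 mat_def)
  moreover have "(\<chi> r c. of_int (ent (Mi tau) r c)) ** (\<chi> r c. of_int (ent (Di tau) r c)) = (mat 1 :: real^2^2)"
    using D M h' by (auto simp: vec_eq_iff forall_2 matrix_matrix_mult_def sum_2 mat_def)
  ultimately show ?thesis unfolding Mmat_def using inv_unique by metis
qed

lemma shape_nth: "q < length (shape tau j1 j2 k) \<Longrightarrow> shape tau j1 j2 k ! q =
  (if q < length tau then tau ! q else if q = length tau then Inf j1 else if q = Suc (length tau) then Ext
   else if q < length tau + 2 + k then Fin j2 else if q = length tau + 2 + k then Inf j2 else Ext)"
  by (auto simp: shape_def nth_append nth_Cons split: nat.splits)

lemma shape_len: "length (shape tau j1 j2 k) = length tau + 4 + k"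
  by (simp add: shape_def)


lemma other2: "(j1::2) \<noteq> j2 \<Longrightarrow> j = j1 \<or> j = j2"
  by (metis exhaust_2)

lemma letter_cases: "(j1::2) \<noteq> j2 \<Longrightarrow> l = Fin j1 \<or> l = Fin j2 \<or> l = Inf j1 \<or> l = Inf j2 \<or> l = Ext"
  by (cases l) (use other2 in blast)+

lemma shape_adm:
  assumes tau: "set tau \<subseteq> range Fin" and j: "j1 \<noteq> j2"
  shows "admissible (shape tau j1 j2 k) \<and> final (shape tau j1 j2 k)"
proof -
  let ?w = "shape tau j1 j2 k"
  let ?L = "length tau"
  have tf: "\<And>q. q < ?L \<Longrightarrow> \<exists>j. tau ! q = Fin j" using tau by (auto dest!: nth_mem)
  have tf2: "\<And>q j. q < ?L \<Longrightarrow> tau ! q \<noteq> Inf j \<and> tau ! q \<noteq> Ext" using tf by fastforce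
  note N = shape_nth[of _ tau j1 j2 k] shape_len[of tau j1 j2 k]
  have a1: "\<forall>p q j. p < q \<and> q < length ?w \<and> ?w ! p = Inf j \<longrightarrow> ?w ! q \<noteq> Fin j \<and> ?w ! q \<noteq> Inf j"
  proof (intro allI impI)
    fix p q j assume h: "p < q \<and> q < length ?w \<and> ?w ! p = Inf j"
    then have "p = ?L \<and> j = j1 \<or> p = ?L + 2 + k \<and> j = j2"
      using N tf2[of p j] by (auto split: if_splits)
    then show "?w ! q \<noteq> Fin j \<and> ?w ! q \<noteq> Inf j"
      using h N j by (auto split: if_splits)
  qed
  have a2: "\<forall>p j. Suc p < length ?w \<and> ?w ! p = Inf j \<longrightarrow> ?w ! Suc p = Ext"
  proof (intro allI impI)
    fix p j assume h: "Suc p < length ?w \<and> ?w ! p = Inf j"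
    then have "p = ?L \<or> p = ?L + 2 + k"
      using N tf2[of p j] by (auto split: if_splits)
    then show "?w ! Suc p = Ext" using h N by auto
  qed
  have a3: "\<forall>p. p < length ?w \<and> ?w ! p = Ext \<longrightarrow> (\<exists>q j. Suc q = p \<and> ?w ! q = Inf j)"
  proof (intro allI impI)
    fix p assume h: "p < length ?w \<and> ?w ! p = Ext"
    then have "p = Suc ?L \<or> p = ?L + 3 + k"
      using N tf2[of p] by (auto split: if_splits)
    then show "\<exists>q j. Suc q = p \<and> ?w ! q = Inf j"
    proof
      assume "p = Suc ?L" then show ?thesis using N by (intro exI[of _ ?L] exI[of _ j1]) auto
    next
      assume "p = ?L + 3 + k" then show ?thesis using N by (intro exI[of _ "?L + 2 + k"] exI[of _ j2]) auto
    qed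
  qed
  have f: "final ?w" unfolding final_def Xw_def
  proof
    fix j :: 2
    have "j = j1 \<or> j = j2" using other2[OF j] .
    then show "j \<in> {j. \<exists>p. Suc p < length ?w \<and> ?w ! p = Inf j \<and> ?w ! Suc p = Ext}"
    proof
      assume "j = j1" then show ?thesis using N by (auto intro!: exI[of _ ?L])
    next
      assume "j = j2" then show ?thesis using N by (auto intro!: exI[of _ "?L + 2 + k"])
    qed
  qed
  show ?thesis using a1 a2 a3 f unfolding admissible_def by blast
qed

lemma struct_gen:
  assumes adm: "admissible w" and j: "j1 \<noteq> j2" and ab: "pa < pb"
    and a: "w ! pa = Inf j1" "w ! Suc pa = Ext"
    and b: "w ! pb = Inf j2" "w ! Suc pb = Ext" "Suc pb < length w"
  shows "set (take pa w) \<subseteq> range Fin \<and> w = shape (take pa w) j1 j2 (pb - pa - 2)"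
proof -
  have A1: "\<And>p q j. p < q \<Longrightarrow> q < length w \<Longrightarrow> w ! p = Inf j \<Longrightarrow> w ! q \<noteq> Fin j \<and> w ! q \<noteq> Inf j"
    and A3: "\<And>p. p < length w \<Longrightarrow> w ! p = Ext \<Longrightarrow> (\<exists>q j. Suc q = p \<and> w ! q = Inf j)"
    using adm unfolding admissible_def by blast+
  have "pb \<noteq> Suc pa" using a b by auto
  then have F4: "pa + 2 \<le> pb" using ab by linarith
  have noinf: "\<And>q j. q < pb \<Longrightarrow> q \<noteq> pa \<Longrightarrow> w ! q \<noteq> Inf j"
  proof -
    fix q j assume q: "q < pb" "q \<noteq> pa"
    show "w ! q \<noteq> Inf j"
    proof
      assume h: "w ! q = Inf j"
      have "j = j1 \<or> j = j2" using other2[OF j] .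
      then show False
      proof
        assume "j = j1"
        moreover have "pa < length w" "q < length w" using ab b(3) q by auto
        ultimately show False using h a q A1[of q pa j] A1[of pa q j]
          by (cases "q < pa") auto
      next
        assume "j = j2"
        moreover have "pb < length w" using b(3) by auto
        ultimately show False using h b q A1[of q pb j] by auto
      qed
    qed
  qed
  have F1: "\<And>q. q < pa \<Longrightarrow> w ! q \<in> range Fin"
  proof -
    fix q assume q: "q < pa"
    have "w ! q \<noteq> Ext"
    proof
      assume "w ! q = Ext"
      then obtain q0 j' where "Suc q0 = q" "w ! q0 = Inf j'" using A3[of q] q ab b(3) by auto
      then show False using noinf[of q0 j'] q ab by auto
    qed
    moreover have "\<And>j'. w ! q \<noteq> Inf j'" using noinf q ab by auto
    ultimately show "w ! q \<in> range Fin" by (cases "w ! q") auto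
  qed
  have F2: "\<And>q. pa + 2 \<le> q \<Longrightarrow> q < pb \<Longrightarrow> w ! q = Fin j2"
  proof -
    fix q assume q: "pa + 2 \<le> q" "q < pb"
    have "w ! q \<noteq> Ext"
    proof
      assume "w ! q = Ext"
      then obtain q0 j' where q0: "Suc q0 = q" "w ! q0 = Inf j'" using A3[of q] q ab b(3) by auto
      show False
      proof (cases "q0 = Suc pa")
        case True then show False using q0 a by simp
      next
        case False then show False using noinf[of q0 j'] q q0 by auto
      qed
    qed
    moreover have "\<And>j'. w ! q \<noteq> Inf j'" using noinf q by auto
    moreover have "w ! q \<noteq> Fin j1" using A1[of pa q j1] a q ab b(3) by auto
    ultimately show "w ! q = Fin j2" using letter_cases[OF j, of "w ! q"] by blast
  qed
  have F3: "length w = pb + 2"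
  proof (rule ccontr)
    assume "length w \<noteq> pb + 2"
    then have l: "pb + 2 < length w" using b(3) by linarith
    let ?q = "pb + 2"
    have "w ! ?q \<noteq> Ext"
    proof
      assume "w ! ?q = Ext"
      then obtain q0 j' where q0: "Suc q0 = ?q" "w ! q0 = Inf j'" using A3[of ?q] l by auto
      then show False using b by simp
    qed
    moreover have "w ! ?q \<noteq> Fin j1 \<and> w ! ?q \<noteq> Inf j1" using A1[of pa ?q j1] a ab l by auto
    moreover have "w ! ?q \<noteq> Fin j2 \<and> w ! ?q \<noteq> Inf j2" using A1[of pb ?q j2] b l by auto
    ultimately show False using letter_cases[OF j, of "w ! ?q"] by blast
  qed
  have S: "set (take pa w) \<subseteq> range Fin"
    using F1 by (auto simp: in_set_conv_nth)
  have "w = shape (take pa w) j1 j2 (pb - pa - 2)"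
  proof (rule nth_equalityI)
    show "length w = length (shape (take pa w) j1 j2 (pb - pa - 2))"
      using F3 F4 ab b by (simp add: shape_len)
    fix q assume q: "q < length w"
    have lt: "length (take pa w) = pa" using ab b by simp
    have e': "pa + 2 + (pb - pa - 2) = pb" using F4 by simp
    have ql: "q < length (shape (take pa w) j1 j2 (pb - pa - 2))" using q F3 F4 lt by (simp add: shape_len)
    consider "q < pa" | "q = pa" | "q = Suc pa" | "Suc pa < q \<and> q < pb" | "q = pb" | "q = Suc pb"
      using q F3 by linarith
    then have R: "w ! q = (if q < pa then take pa w ! q else if q = pa then letter.Inf j1
        else if q = Suc pa then Ext else if q < pb then Fin j2 else if q = pb then letter.Inf j2 else Ext)"
    proof cases
      case 4 then show ?thesis using F2[of q] by auto
    next
      case 5 then show ?thesis using b F4 by auto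
    next
      case 6 then show ?thesis using b F4 by auto
    qed (use a F4 in auto)
    show "w ! q = shape (take pa w) j1 j2 (pb - pa - 2) ! q"
      by (simp only: R shape_nth[OF ql] lt e')
  qed
  then show ?thesis using S by blast
qed

lemma part1:
  assumes "admissible w" "final w"
  shows "\<exists>tau j1 j2 k. set tau \<subseteq> range Fin \<and> j1 \<noteq> j2 \<and> w = shape tau j1 j2 k"
proof -
  obtain p1 where p1: "Suc p1 < length w" "w ! p1 = Inf 1" "w ! Suc p1 = Ext"
    using assms(2) unfolding final_def Xw_def by blast
  obtain p2 where p2: "Suc p2 < length w" "w ! p2 = Inf 2" "w ! Suc p2 = Ext"
    using assms(2) unfolding final_def Xw_def by blast
  have "p1 \<noteq> p2" using p1(2) p2(2) by auto
  then have "p1 < p2 \<or> p2 < p1" by linarith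
  then show ?thesis
  proof
    assume "p1 < p2"
    then have "set (take p1 w) \<subseteq> range Fin \<and> w = shape (take p1 w) 1 2 (p2 - p1 - 2)"
      using struct_gen[OF assms(1), of 1 2 p1 p2] p1 p2 by simp
    moreover have "(1::2) \<noteq> 2" by simp
    ultimately show ?thesis by blast
  next
    assume "p2 < p1"
    then have "set (take p2 w) \<subseteq> range Fin \<and> w = shape (take p2 w) 2 1 (p1 - p2 - 2)"
      using struct_gen[OF assms(1), of 2 1 p2 p1] p1 p2 by simp
    moreover have "(2::2) \<noteq> 1" by simp
    ultimately show ?thesis by blast
  qed
qed


lemma coprime_lin: assumes "u * x + v * y = (1::int)" shows "coprime x y"
proof (rule coprimeI)
  fix c assume "c dvd x" "c dvd y"
  then have "c dvd u * x + v * y" by simp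
  then have "c dvd 1" using assms by metis
  then show "is_unit c" by simp
qed

lemma pair_unique:
  fixes p q r s p' q' r' s' :: int
  assumes nn: "p \<ge> 0" "q \<ge> 0" "r \<ge> 0" "s \<ge> 0" "p' \<ge> 0" "q' \<ge> 0" "r' \<ge> 0" "s' \<ge> 0"
    and d: "p * s - q * r = 1" "p' * s' - q' * r' = 1"
    and e: "p + r = p' + r'" "q + s = q' + s'"
  shows "p = p' \<and> q = q' \<and> r = r' \<and> s = s'"
proof -
  define x where "x = p + r"
  define y where "y = q + s"
  have h: "p * y - q * x = 1" using d(1) unfolding x_def y_def by (simp add: algebra_simps)
  have h': "p' * y - q' * x = 1" using d(2) e unfolding x_def y_def by (simp add: algebra_simps)
  have cop: "coprime x y" using coprime_lin[of "-q" x p y] h by (simp add: algebra_simps)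
  have eq: "(p - p') * y = (q - q') * x" using h h' by (simp add: algebra_simps)
  have "x dvd (p - p') * y" using eq by (metis dvd_triv_right)
  then have "x dvd (p - p')" using coprime_dvd_mult_left_iff[OF cop] by blast
  then obtain t where t: "p - p' = x * t" by (auto elim: dvdE)
  have x1: "x \<ge> 1"
  proof (rule ccontr)
    assume "\<not> x \<ge> 1"
    then have "p = 0" "r = 0" using nn unfolding x_def by auto
    then show False using d(1) by simp
  qed
  have qr: "q' * r' \<ge> 0" "q * r \<ge> 0" using nn by simp_all
  have xb: "p \<le> x" "p' \<le> x" using nn e unfolding x_def by linarith+
  have "t = 0"
  proof (rule ccontr)
    assume "t \<noteq> 0"
    then consider "t \<ge> 1" | "t \<le> -1" by linarith
    then show False
    proof cases
      case 1
      then have "x * t \<ge> x * 1" using x1 by (intro mult_left_mono) auto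
      then have "p' = 0" using t nn xb by linarith
      then show False using d(2) qr by simp
    next
      case 2
      then have "x * t \<le> x * (-1)" using x1 by (intro mult_left_mono) auto
      then have "p = 0" using t nn xb by linarith
      then show False using d(1) qr by simp
    qed
  qed
  then have "p = p'" using t by simp
  then have "(q - q') * x = 0" using eq by simp
  then have "q = q'" using x1 by simp
  then show ?thesis using \<open>p = p'\<close> e by simp
qed

lemma Mi_sum3: "set ts \<subseteq> range Fin \<Longrightarrow> ts \<noteq> [] \<Longrightarrow> Mi ts = (a,b,c,d) \<Longrightarrow> a + b + c + d \<ge> 3"
proof -
  assume ts: "set ts \<subseteq> range Fin" "ts \<noteq> []" and M: "Mi ts = (a,b,c,d)"
  obtain rho x where rx: "ts = rho @ [x]" using ts(2) by (metis rev_exhaust)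
  then obtain j where x: "x = Fin j" using ts by auto
  obtain a' b' c' d' where M': "Mi rho = (a',b',c',d')" by (cases "Mi rho") auto
  note I = Mi_inv[OF M']
  have "c' + d' \<ge> 1" "a' + b' \<ge> 1"
  proof -
    show "c' + d' \<ge> 1"
    proof (rule ccontr)
      assume "\<not> ?thesis" then have "c' = 0" "d' = 0" using I by auto
      then show False using I by simp
    qed
    show "a' + b' \<ge> 1"
    proof (rule ccontr)
      assume "\<not> ?thesis" then have "a' = 0" "b' = 0" using I by auto
      then show False using I by simp
    qed
  qed
  then show ?thesis using M rx x M' I by (auto split: if_splits)
qed

lemma Mi_inj: "set s1 \<subseteq> range Fin \<Longrightarrow> set s2 \<subseteq> range Fin \<Longrightarrow> Mi s1 = Mi s2 \<Longrightarrow> s1 = s2"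
proof (induction s1 arbitrary: s2 rule: rev_induct)
  case Nil
  show ?case
  proof (rule ccontr)
    assume "[] \<noteq> s2"
    then have "s2 \<noteq> []" by simp
    obtain a b c d where M: "Mi s2 = (a,b,c,d)" by (cases "Mi s2") auto
    then show False using Mi_sum3[OF Nil(2) \<open>s2 \<noteq> []\<close> M] Nil(3) by simp
  qed
next
  case (snoc x s1)
  obtain j where x: "x = Fin j" using snoc.prems by auto
  have s1: "set s1 \<subseteq> range Fin" using snoc.prems by auto
  obtain a b c d where M: "Mi s1 = (a,b,c,d)" by (cases "Mi s1") auto
  have "s2 \<noteq> []"
  proof
    assume "s2 = []"
    obtain a0 b0 c0 d0 where M0: "Mi (s1 @ [x]) = (a0,b0,c0,d0)" by (cases "Mi (s1 @ [x])") auto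
    have "a0 + b0 + c0 + d0 \<ge> 3" using Mi_sum3[OF snoc.prems(1) _ M0] by simp
    then show False using snoc.prems(3) M0 \<open>s2 = []\<close> by simp
  qed
  then obtain s2' y where s2: "s2 = s2' @ [y]" by (metis rev_exhaust)
  then obtain j' where y: "y = Fin j'" using snoc.prems by auto
  have s2': "set s2' \<subseteq> range Fin" using snoc.prems s2 by auto
  obtain a' b' c' d' where M': "Mi s2' = (a',b',c',d')" by (cases "Mi s2'") auto
  note I = Mi_inv[OF M] and I' = Mi_inv[OF M']
  have st: "Mstep (a,b,c,d) (Fin j) = Mstep (a',b',c',d') (Fin j')"
    using snoc.prems(3) M M' x y s2 by simp
  have "j = j'"
  proof (rule ccontr)
    assume "j \<noteq> j'"
    then have "j = 1 \<and> j' = 2 \<or> j = 2 \<and> j' = 1" by (metis exhaust_2)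
    then show False
    proof
      assume "j = 1 \<and> j' = 2"
      then have "a + c = a'" "b + d = b'" "c = c' + a'" "d = d' + b'" using st by auto
      then have "a = 0" "b = 0" using I I' by auto
      then show False using I by simp
    next
      assume "j = 2 \<and> j' = 1"
      then have "a' + c' = a" "b' + d' = b" "c' = c + a" "d' = d + b" using st by auto
      then have "a' = 0" "b' = 0" using I I' by auto
      then show False using I' by simp
    qed
  qed
  then have "Mi s1 = Mi s2'" using st M M' by (auto split: if_splits)
  then have "s1 = s2'" using snoc.IH[OF s1 s2'] by simp
  then show ?case using s2 x y \<open>j = j'\<close> by simp
qed


lemma rep_snoc: "replicate (Suc m) x = replicate m x @ [x]"
  by (simp add: replicate_append_same)

lemma word_equiv_sym: "word_equiv u v \<Longrightarrow> word_equiv v u"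
  unfolding word_equiv_def
proof (induction rule: rtranclp_induct)
  case base then show ?case by simp
next
  case (step y z)
  then have "(\<lambda>u v. red_step u v \<or> red_step v u) z y" by blast
  then show ?case using step(3) by (rule converse_rtranclp_into_rtranclp)
qed

lemma word_equiv_trans: "word_equiv u v \<Longrightarrow> word_equiv v w \<Longrightarrow> word_equiv u w"
  unfolding word_equiv_def by (rule rtranclp_trans)

lemma red_tau: "red_step (shape (s @ replicate (Suc m) (Fin j1)) j1 j2 k) (shape (s @ replicate m (Fin j1)) j1 j2 k)"
  unfolding red_step_def
  by (rule exI[of _ "s @ replicate m (Fin j1)"], rule exI[of _ "Ext # replicate k (Fin j2) @ [Inf j2, Ext]"],
      rule exI[of _ j1]) (simp add: shape_def replicate_append_same)

lemma red_k: "red_step (shape s j1 j2 (Suc k)) (shape s j1 j2 k)"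
  unfolding red_step_def
  by (rule exI[of _ "s @ [Inf j1, Ext] @ replicate k (Fin j2)"], rule exI[of _ "[Ext]"],
      rule exI[of _ j2]) (simp add: shape_def replicate_append_same)

lemma equiv_tau: "word_equiv (shape (s @ replicate m (Fin j1)) j1 j2 k) (shape s j1 j2 k)"
proof (induction m)
  case 0 then show ?case by (simp add: word_equiv_def)
next
  case (Suc m)
  have "word_equiv (shape (s @ replicate (Suc m) (Fin j1)) j1 j2 k) (shape (s @ replicate m (Fin j1)) j1 j2 k)"
    unfolding word_equiv_def by (rule r_into_rtranclp) (use red_tau[of s m j1 j2 k] in blast)
  then show ?case using Suc word_equiv_trans by blast
qed

lemma equiv_k: "word_equiv (shape s j1 j2 k) (shape s j1 j2 0)"
proof (induction k)
  case 0 then show ?case by (simp add: word_equiv_def)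
next
  case (Suc k)
  have "word_equiv (shape s j1 j2 (Suc k)) (shape s j1 j2 k)"
    unfolding word_equiv_def by (rule r_into_rtranclp) (simp add: red_k)
  then show ?case using Suc word_equiv_trans by blast
qed

lemma decomp: "\<exists>s m. tau = s @ replicate m (Fin j1) \<and> (s = [] \<or> last s \<noteq> Fin j1)"
proof (induction tau rule: rev_induct)
  case Nil then show ?case by auto
next
  case (snoc x tau)
  then obtain s m where sm: "tau = s @ replicate m (Fin j1)" "s = [] \<or> last s \<noteq> Fin j1" by blast
  show ?case
  proof (cases "x = Fin j1")
    case True
    then show ?thesis using sm by (intro exI[of _ s] exI[of _ "Suc m"]) (simp add: replicate_append_same)
  next
    case False
    then show ?thesis by (intro exI[of _ "tau @ [x]"] exI[of _ 0]) simp
  qed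
qed

lemma row_rep: "j1 \<noteq> j2 \<Longrightarrow> ent (Mi (s @ replicate m (Fin j1))) j2 i = ent (Mi s) j2 i"
proof (induction m)
  case 0 then show ?case by simp
next
  case (Suc m)
  obtain a b c d where M: "Mi (s @ replicate m (Fin j1)) = (a,b,c,d)"
    by (cases "Mi (s @ replicate m (Fin j1))") auto
  have "Mi (s @ replicate (Suc m) (Fin j1)) = Mstep (Mi (s @ replicate m (Fin j1))) (Fin j1)"
    by (simp only: rep_snoc append_assoc[symmetric] Mi_snoc)
  then have "Mi (s @ replicate (Suc m) (Fin j1)) = Mstep (a,b,c,d) (Fin j1)" using M by simp
  then show ?case using Suc M by (auto dest: two_cases)
qed

lemma unique_core:
  assumes j: "j1 \<noteq> j2" and s: "set s \<subseteq> range Fin" "s = [] \<or> last s \<noteq> Fin j1"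
    and s': "set s' \<subseteq> range Fin" "s' = [] \<or> last s' \<noteq> Fin j1"
    and r: "\<And>i. ent (Mi s) j2 i = ent (Mi s') j2 i"
  shows "s = s'"
proof -
  have shp: "\<And>t. set t \<subseteq> range Fin \<Longrightarrow> (t = [] \<or> last t \<noteq> Fin j1) \<Longrightarrow> t = [] \<or> (\<exists>rho. t = rho @ [Fin j2])"
  proof -
    fix t :: "letter list" assume t: "set t \<subseteq> range Fin" "t = [] \<or> last t \<noteq> Fin j1"
    show "t = [] \<or> (\<exists>rho. t = rho @ [Fin j2])"
    proof (cases t rule: rev_cases)
      case Nil then show ?thesis by simp
    next
      case (snoc rho y)
      then obtain jj where "y = Fin jj" using t by auto
      then have "jj = j2" using t snoc other2[OF j, of jj] by auto
      then show ?thesis using snoc \<open>y = Fin jj\<close> by auto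
    qed
  qed
  have rowsum: "\<And>rho a b c d i. Mi rho = (a,b,c,d) \<Longrightarrow>
     ent (Mi (rho @ [Fin j2])) j2 i = (if i = 1 then a + c else b + d)"
    by (auto dest: two_cases)
  have nonId: "\<And>rho a b c d. Mi rho = (a,b,c,d) \<Longrightarrow> \<not> (\<forall>i. (if i = 1 then a + c else b + d) = ent (1,0,0,1) j2 i)"
  proof
    fix rho a b c d assume M: "Mi rho = (a,b,c,d)" and h: "\<forall>i::2. (if i = 1 then a + c else b + d) = ent (1,0,0,1) j2 i"
    note I = Mi_inv[OF M]
    have "a + c = 0 \<or> b + d = 0" using h[rule_format, of 1] h[rule_format, of 2] by (auto dest: two_cases split: if_splits)
    then have "(a = 0 \<and> c = 0) \<or> (b = 0 \<and> d = 0)" using I by auto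
    then show False using I by auto
  qed
  consider "s = [] \<and> s' = []" | rho where "s = [] \<and> s' = rho @ [Fin j2]" | rho where "s = rho @ [Fin j2] \<and> s' = []"
    | rho rho' where "s = rho @ [Fin j2]" "s' = rho' @ [Fin j2]"
    using shp[OF s] shp[OF s'] by blast
  then show ?thesis
  proof cases
    case 1 then show ?thesis by simp
  next
    case 2
    obtain a b c d where M: "Mi rho = (a,b,c,d)" by (cases "Mi rho") auto
    show ?thesis using nonId[OF M] r rowsum[OF M] 2 by auto
  next
    case 3
    obtain a b c d where M: "Mi rho = (a,b,c,d)" by (cases "Mi rho") auto
    show ?thesis using nonId[OF M] r rowsum[OF M] 3 by auto
  next
    case 4
    obtain a b c d where M: "Mi rho = (a,b,c,d)" by (cases "Mi rho") auto
    obtain a' b' c' d' where M': "Mi rho' = (a',b',c',d')" by (cases "Mi rho'") auto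
    have "a + c = a' + c'" using r[of 1] rowsum[OF M, of 1] rowsum[OF M', of 1] 4 by simp
    moreover have "b + d = b' + d'" using r[of 2] rowsum[OF M, of 2] rowsum[OF M', of 2] 4 by simp
    ultimately have "Mi rho = Mi rho'" using pair_unique[of a b c d a' b' c' d'] Mi_inv[OF M] Mi_inv[OF M'] M M' by auto
    moreover have "set rho \<subseteq> range Fin" "set rho' \<subseteq> range Fin" using s s' 4 by auto
    ultimately show ?thesis using Mi_inj 4 by blast
  qed
qed


lemma dich:
  fixes a b c d :: int
  assumes nn: "a \<ge> 0" "b \<ge> 0" "c \<ge> 0" "d \<ge> 0" and det: "a * d - b * c = 1"
    and ne: "(a,b,c,d) \<noteq> (1,0,0,1)"
  shows "(c \<le> a \<and> d \<le> b) \<or> (a \<le> c \<and> b \<le> d)"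
proof (rule ccontr)
  assume "\<not> ?thesis"
  then consider "a < c \<and> d < b" | "c < a \<and> b < d" by linarith
  then show False
  proof cases
    case 1
    then have "(a + 1) * (d + 1) \<le> c * b" using nn by (intro mult_mono) auto
    then show False using det nn by (simp add: algebra_simps)
  next
    case 2
    then have "(c + 1) * (b + 1) \<le> a * d" using nn by (intro mult_mono) auto
    then have "b + c \<le> 0" using det by (simp add: algebra_simps)
    then have "b = 0" "c = 0" using nn by auto
    then have "a * d = 1" using det by simp
    then have "a = 1" "d = 1" using nn zmult_eq_1_iff by auto
    then show False using ne \<open>b = 0\<close> \<open>c = 0\<close> by simp
  qed
qed

lemma surj_Mi:
  fixes a b c d :: int
  assumes "a \<ge> 0" "b \<ge> 0" "c \<ge> 0" "d \<ge> 0" "a * d - b * c = 1"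
  shows "\<exists>tau. set tau \<subseteq> range Fin \<and> Mi tau = (a,b,c,d)"
  using assms
proof (induction "nat (a + b + c + d)" arbitrary: a b c d rule: less_induct)
  case less
  show ?case
  proof (cases "(a,b,c,d) = (1,0,0,1)")
    case True then show ?thesis by (intro exI[of _ "[]"]) auto
  next
    case False
    have cd: "c + d \<ge> 1"
    proof (rule ccontr)
      assume "\<not> ?thesis" then have "c = 0" "d = 0" using less by auto
      then show False using less by simp
    qed
    have ab: "a + b \<ge> 1"
    proof (rule ccontr)
      assume "\<not> ?thesis" then have "a = 0" "b = 0" using less by auto
      then show False using less by simp
    qed
    from dich[OF less(2-6) False] show ?thesis
    proof
      assume h: "c \<le> a \<and> d \<le> b"
      have "nat ((a - c) + (b - d) + c + d) < nat (a + b + c + d)" using cd h less by auto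
      moreover have "(a - c) * d - (b - d) * c = 1" using less(6) by (simp add: algebra_simps)
      ultimately have "\<exists>tau. set tau \<subseteq> range Fin \<and> Mi tau = (a - c, b - d, c, d)"
        by (intro less(1)) (use h less in auto)
      then obtain tau where t: "set tau \<subseteq> range Fin" "Mi tau = (a - c, b - d, c, d)" by blast
      show ?thesis using t by (intro exI[of _ "tau @ [Fin 1]"]) auto
    next
      assume h: "a \<le> c \<and> b \<le> d"
      have "nat (a + b + (c - a) + (d - b)) < nat (a + b + c + d)" using ab h less by auto
      moreover have "a * (d - b) - b * (c - a) = 1" using less(6) by (simp add: algebra_simps)
      ultimately have "\<exists>tau. set tau \<subseteq> range Fin \<and> Mi tau = (a, b, c - a, d - b)"
        by (intro less(1)) (use h less in auto)
      then obtain tau where t: "set tau \<subseteq> range Fin" "Mi tau = (a, b, c - a, d - b)" by blast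
      show ?thesis using t by (intro exI[of _ "tau @ [Fin 2]"]) auto
    qed
  qed
qed

lemma complete_row:
  fixes x y :: int
  assumes "x \<ge> 0" "y \<ge> 0" "coprime x y" "\<not> (x = 0 \<and> y = 1)"
  shows "\<exists>r s. r \<ge> 0 \<and> s \<ge> 0 \<and> x * s - y * r = 1"
proof (cases "y = 0")
  case True
  then have "x = 1" using assms by auto
  then show ?thesis using True by (intro exI[of _ 0] exI[of _ 1]) auto
next
  case False
  then have y1: "y \<ge> 1" using assms by auto
  have x1: "x \<ge> 1"
  proof (rule ccontr)
    assume "\<not> ?thesis" then have "x = 0" using assms by auto
    then have "y = 1" using assms by auto
    then show False using assms \<open>x = 0\<close> by auto
  qed
  obtain u v where uv: "u * x + v * y = 1" using bezout_int[of x y] assms(3) by auto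
  define t where "t = (u - 1) div y"
  define s where "s = (u - 1) mod y + 1"
  have s1: "s \<ge> 1" unfolding s_def using y1 by simp
  have se: "s = u - t * y" unfolding s_def t_def using div_mult_mod_eq[of "u - 1" y] by linarith
  define r where "r = - (v + x * t)"
  have re: "x * s - y * r = 1" unfolding r_def se using uv by (simp add: algebra_simps)
  have "1 * 1 \<le> x * s" using x1 s1 by (intro mult_mono) auto
  then have "y * r \<ge> 0" using re by linarith
  then have "r \<ge> 0" using y1 by (simp add: zero_le_mult_iff)
  then show ?thesis using re s1 by (intro exI[of _ r] exI[of _ s]) auto
qed


lemma Mmat_row: "set tau \<subseteq> range Fin \<Longrightarrow> j1 \<noteq> j2 \<Longrightarrow>
  Mmat (shape tau j1 j2 k) $ r $ c = of_int (ent (Mi tau) r c)"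
  using Mmat_shape by simp

lemma part2:
  assumes tau: "set tau \<subseteq> range Fin" and j: "j1 \<noteq> j2" and w: "w = shape tau j1 j2 k"
  shows "(\<forall>i. Mmat w $ j2 $ i \<ge> 0)
        \<and> (\<exists>a b::int. Mmat w $ j2 $ 1 = of_int a \<and> Mmat w $ j2 $ 2 = of_int b \<and> coprime a b)
        \<and> (\<forall>i. Mmat w $ j2 = axis i 1 \<longrightarrow> i = j2)"
proof -
  obtain a b c d where M: "Mi tau = (a,b,c,d)" by (cases "Mi tau") auto
  note I = Mi_inv[OF M]
  have R: "\<And>i. Mmat w $ j2 $ i = of_int (ent (a,b,c,d) j2 i)" using Mmat_row[OF tau j] w M by simp
  have p1: "\<forall>i. Mmat w $ j2 $ i \<ge> 0" unfolding R using I by auto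
  have p2: "\<exists>a' b'::int. Mmat w $ j2 $ 1 = of_int a' \<and> Mmat w $ j2 $ 2 = of_int b' \<and> coprime a' b'"
  proof (cases "j2 = 1")
    case True
    have "coprime a b" using coprime_lin[of d a "-c" b] I by (simp add: algebra_simps)
    then show ?thesis unfolding R using True by auto
  next
    case False
    then have "j2 = 2" by (rule two_cases)
    have "coprime c d" using coprime_lin[of "-b" c a d] I by (simp add: algebra_simps)
    then show ?thesis unfolding R using \<open>j2 = 2\<close> by auto
  qed
  have p3: "\<forall>i. Mmat w $ j2 = axis i 1 \<longrightarrow> i = j2"
  proof (intro allI impI)
    fix i assume h: "Mmat w $ j2 = axis i 1"
    show "i = j2"
    proof (rule ccontr)
      assume ne: "i \<noteq> j2"
      have e1: "ent (a,b,c,d) j2 i = 1" using h R[of i] by (simp add: axis_def)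
      have e0: "ent (a,b,c,d) j2 j2 = 0" using h R[of j2] ne by (simp add: axis_def)
      show False
      proof (cases "j2 = 1")
        case True
        then have "i = 2" using ne two_cases by blast
        then have "a = 0" "b = 1" using e1 e0 True by auto
        then have "c = -1" using I by simp
        then show False using I by simp
      next
        case False
        then have "j2 = 2" by (rule two_cases)
        then have "i = 1" using ne two_cases by blast
        then have "c = 1" "d = 0" using e1 e0 \<open>j2 = 2\<close> by auto
        then have "b = -1" using I by simp
        then show False using I by simp
      qed
    qed
  qed
  show ?thesis using p1 p2 p3 by blast
qed

lemma part3:
  assumes tau: "set tau \<subseteq> range Fin" and j: "j1 \<noteq> j2" and w: "w = shape tau j1 j2 k"
    and tau': "set tau' \<subseteq> range Fin" and j': "j1 \<noteq> j2'" and w': "w' = shape tau' j1 j2' k'"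
    and eq: "Mmat w $ j2 = Mmat w' $ j2'"
  shows "word_equiv w w'"
proof -
  have jj: "j2' = j2" using other2[OF j, of j2'] j' by auto
  obtain s m where sm: "tau = s @ replicate m (Fin j1)" "s = [] \<or> last s \<noteq> Fin j1"
    using decomp by blast
  obtain s' m' where sm': "tau' = s' @ replicate m' (Fin j1)" "s' = [] \<or> last s' \<noteq> Fin j1"
    using decomp by blast
  have sF: "set s \<subseteq> range Fin" using tau sm by auto
  have sF': "set s' \<subseteq> range Fin" using tau' sm' by auto
  have r: "ent (Mi s) j2 i = ent (Mi s') j2 i" for i
  proof -
    have "Mmat w $ j2 $ i = Mmat w' $ j2 $ i" using eq jj by simp
    then have "ent (Mi tau) j2 i = ent (Mi tau') j2 i"
      using Mmat_row[OF tau j] Mmat_row[OF tau' j] w w' jj by simp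
    then show ?thesis using sm(1) sm'(1) row_rep[OF j] by simp
  qed
  have "s = s'" using unique_core[OF j sF sm(2) sF' sm'(2)] r by blast
  have e1: "word_equiv w (shape s j1 j2 0)"
    using w sm(1) equiv_tau[of s m j1 j2 k] equiv_k[of s j1 j2 k] word_equiv_trans by blast
  have e2: "word_equiv w' (shape s j1 j2 0)"
    using w' sm'(1) jj \<open>s = s'\<close> equiv_tau[of s m' j1 j2 k'] equiv_k[of s j1 j2 k'] word_equiv_trans by blast
  show ?thesis using e1 word_equiv_sym[OF e2] word_equiv_trans by blast
qed

lemma part4_core:
  assumes j: "j1 \<noteq> j2" and ab: "a \<ge> 0" "b \<ge> 0" "coprime a b"
    and N: "(N::real^2) $ 1 = of_int a" "N $ 2 = of_int b" "N \<noteq> axis j1 1"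
  shows "\<exists>tau. set tau \<subseteq> range Fin \<and> ent (Mi tau) j2 1 = a \<and> ent (Mi tau) j2 2 = b"
proof (cases "j1 = 1")
  case False
  then have j1: "j1 = 2" by (rule two_cases)
  then have j2: "j2 = 1" using j two_cases by metis
  have "\<not> (a = 0 \<and> b = 1)"
  proof
    assume "a = 0 \<and> b = 1"
    then have "N = axis j1 1" using N j1 by (auto simp: vec_eq_iff forall_2 axis_def)
    then show False using N by simp
  qed
  then obtain r s where rs: "r \<ge> 0" "s \<ge> 0" "a * s - b * r = 1" using complete_row[OF ab] by blast
  obtain tau where "set tau \<subseteq> range Fin" "Mi tau = (a, b, r, s)" using surj_Mi[of a b r s] rs ab by auto
  then show ?thesis using j2 by auto
next
  case True
  then have j2: "j2 = 2" using j two_cases by metis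
  have "\<not> (b = 0 \<and> a = 1)"
  proof
    assume "b = 0 \<and> a = 1"
    then have "N = axis j1 1" using N True by (auto simp: vec_eq_iff forall_2 axis_def)
    then show False using N by simp
  qed
  moreover have "coprime b a" using ab by (simp add: coprime_commute)
  ultimately obtain r s where rs: "r \<ge> 0" "s \<ge> 0" "b * s - a * r = 1" using complete_row[of b a] ab by blast
  obtain tau where "set tau \<subseteq> range Fin" "Mi tau = (s, r, a, b)"
    using surj_Mi[of s r a b] rs ab by (auto simp: algebra_simps)
  then show ?thesis using j2 by auto
qed

theorem mainTheorem14:
  shows
  "(\<forall>\<omega>. admissible \<omega> \<and> final \<omega> \<longrightarrow>
      (\<exists>\<tau> j1 j2 k. set \<tau> \<subseteq> range Fin \<and> j1 \<noteq> j2 \<and> \<omega> = shape \<tau> j1 j2 k))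
   \<and> (\<forall>\<omega> \<tau> j1 j2 k. admissible \<omega> \<and> final \<omega> \<and> set \<tau> \<subseteq> range Fin \<and> j1 \<noteq> j2
        \<and> \<omega> = shape \<tau> j1 j2 k \<longrightarrow>
        (\<forall>i. Mmat \<omega> $ j2 $ i \<ge> 0)
        \<and> (\<exists>a b::int. Mmat \<omega> $ j2 $ 1 = of_int a \<and> Mmat \<omega> $ j2 $ 2 = of_int b \<and> coprime a b)
        \<and> (\<forall>i. Mmat \<omega> $ j2 = axis i 1 \<longrightarrow> i = j2))
   \<and> (\<forall>\<omega> \<omega>' \<tau> \<tau>' j1 j2 j2' k k'.
        admissible \<omega> \<and> final \<omega> \<and> set \<tau> \<subseteq> range Fin \<and> j1 \<noteq> j2 \<and> \<omega> = shape \<tau> j1 j2 k \<and>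
        admissible \<omega>' \<and> final \<omega>' \<and> set \<tau>' \<subseteq> range Fin \<and> j1 \<noteq> j2' \<and> \<omega>' = shape \<tau>' j1 j2' k' \<and>
        Mmat \<omega> $ j2 = Mmat \<omega>' $ j2' \<longrightarrow> word_equiv \<omega> \<omega>')
   \<and> (\<forall>(N::real^2) j1. (\<exists>a b::int. a \<ge> 0 \<and> b \<ge> 0 \<and> coprime a b \<and> N $ 1 = of_int a \<and> N $ 2 = of_int b)
        \<and> N \<noteq> axis j1 1 \<longrightarrow>
        (\<exists>\<tau> j2 k. set \<tau> \<subseteq> range Fin \<and> j1 \<noteq> j2 \<and> admissible (shape \<tau> j1 j2 k)
           \<and> final (shape \<tau> j1 j2 k) \<and> Mmat (shape \<tau> j1 j2 k) $ j2 = N))"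
proof (intro conjI)
  show "\<forall>\<omega>. admissible \<omega> \<and> final \<omega> \<longrightarrow>
      (\<exists>\<tau> j1 j2 k. set \<tau> \<subseteq> range Fin \<and> j1 \<noteq> j2 \<and> \<omega> = shape \<tau> j1 j2 k)"
    using part1 by blast
next
  show "\<forall>\<omega> \<tau> j1 j2 k. admissible \<omega> \<and> final \<omega> \<and> set \<tau> \<subseteq> range Fin \<and> j1 \<noteq> j2
        \<and> \<omega> = shape \<tau> j1 j2 k \<longrightarrow>
        (\<forall>i. Mmat \<omega> $ j2 $ i \<ge> 0)
        \<and> (\<exists>a b::int. Mmat \<omega> $ j2 $ 1 = of_int a \<and> Mmat \<omega> $ j2 $ 2 = of_int b \<and> coprime a b)
        \<and> (\<forall>i. Mmat \<omega> $ j2 = axis i 1 \<longrightarrow> i = j2)"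
  proof (intro allI impI)
    fix w tau j1 j2 k
    assume h: "admissible w \<and> final w \<and> set tau \<subseteq> range Fin \<and> j1 \<noteq> j2 \<and> w = shape tau j1 j2 k"
    then show "(\<forall>i. Mmat w $ j2 $ i \<ge> 0)
        \<and> (\<exists>a b::int. Mmat w $ j2 $ 1 = of_int a \<and> Mmat w $ j2 $ 2 = of_int b \<and> coprime a b)
        \<and> (\<forall>i. Mmat w $ j2 = axis i 1 \<longrightarrow> i = j2)"
      using part2[of tau j1 j2 w k] by blast
  qed
next
  show "\<forall>\<omega> \<omega>' \<tau> \<tau>' j1 j2 j2' k k'.
        admissible \<omega> \<and> final \<omega> \<and> set \<tau> \<subseteq> range Fin \<and> j1 \<noteq> j2 \<and> \<omega> = shape \<tau> j1 j2 k \<and>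
        admissible \<omega>' \<and> final \<omega>' \<and> set \<tau>' \<subseteq> range Fin \<and> j1 \<noteq> j2' \<and> \<omega>' = shape \<tau>' j1 j2' k' \<and>
        Mmat \<omega> $ j2 = Mmat \<omega>' $ j2' \<longrightarrow> word_equiv \<omega> \<omega>'"
  proof (intro allI impI)
    fix w w' tau tau' j1 j2 j2' k k'
    assume h: "admissible w \<and> final w \<and> set tau \<subseteq> range Fin \<and> j1 \<noteq> j2 \<and> w = shape tau j1 j2 k \<and>
        admissible w' \<and> final w' \<and> set tau' \<subseteq> range Fin \<and> j1 \<noteq> j2' \<and> w' = shape tau' j1 j2' k' \<and>
        Mmat w $ j2 = Mmat w' $ j2'"
    then show "word_equiv w w'" using part3[of tau j1 j2 w k tau' j2' w' k'] by blast
  qed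
next
  show "\<forall>(N::real^2) j1. (\<exists>a b::int. a \<ge> 0 \<and> b \<ge> 0 \<and> coprime a b \<and> N $ 1 = of_int a \<and> N $ 2 = of_int b)
        \<and> N \<noteq> axis j1 1 \<longrightarrow>
        (\<exists>\<tau> j2 k. set \<tau> \<subseteq> range Fin \<and> j1 \<noteq> j2 \<and> admissible (shape \<tau> j1 j2 k)
           \<and> final (shape \<tau> j1 j2 k) \<and> Mmat (shape \<tau> j1 j2 k) $ j2 = N)"
  proof (intro allI impI)
  fix N :: "real^2" and j1 :: 2
  assume h: "(\<exists>a b::int. a \<ge> 0 \<and> b \<ge> 0 \<and> coprime a b \<and> N $ 1 = of_int a \<and> N $ 2 = of_int b)
        \<and> N \<noteq> axis j1 1"
  then obtain a b :: int where ab: "a \<ge> 0" "b \<ge> 0" "coprime a b" "N $ 1 = of_int a" "N $ 2 = of_int b"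
    by blast
  define j2 :: 2 where "j2 = (if j1 = 1 then 2 else 1)"
  have j: "j1 \<noteq> j2" unfolding j2_def using two_cases by auto
  obtain tau where t: "set tau \<subseteq> range Fin" "ent (Mi tau) j2 1 = a" "ent (Mi tau) j2 2 = b"
    using part4_core[OF j ab(1-3) ab(4,5)] h by blast
  have "Mmat (shape tau j1 j2 0) $ j2 = N"
    using Mmat_row[OF t(1) j] t ab by (simp add: vec_eq_iff forall_2)
  then show "\<exists>\<tau> j2 k. set \<tau> \<subseteq> range Fin \<and> j1 \<noteq> j2 \<and> admissible (shape \<tau> j1 j2 k)
           \<and> final (shape \<tau> j1 j2 k) \<and> Mmat (shape \<tau> j1 j2 k) $ j2 = N"
    using shape_adm[OF t(1) j, of 0] t(1) j by blast
  qed
qed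

end
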